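(* Let $n\geqslant 3$ and let $\alpha_1<\alpha_2<\cdots<\alpha_n$ be real numbers. Let $D$ be the $n\times n$ matrix with $D_{ij}=(\alpha_i-\alpha_j)^2$, and let $D'$ be obtained from $D$ by dividing every entry $D_{ij}$ by the sum $d_j$ of the entries of the $j$th column of $D$. For $k\in\mathbb{Z}/n\mathbb{Z}$ let $u_k\in\mathbb{R}^n$ have $i$th coordinate $(\alpha_i-\alpha_k)(\alpha_i-\alpha_{k+1})$, and let $s_k$ be the sum of the coordinates of $u_k$. Then $\operatorname{rank}(D)=3$, each $u_k$ lies in $\operatorname{col}(D)$, and the polytope $\mathcal{P}_{out}(D')$ is an $n$-gon whose vertices are exactly $v_k=s_k^{-1}u_k$, $k=1,\ldots,n$.
   Context: Indices are taken in $\mathbb{Z}/n\mathbb{Z}$, so that $\alpha_{n+1}=\alpha_1$. $\operatorname{col}(A)$ is the linear span of the columns of $A$; $\Delta_n=\{x\in\mathbb{R}^n: x_1+\cdots+x_n=1,\ x_i\geqslant0\}$; $\mathcal{P}_{out}(A)=\Delta_n\cap\operatorname{col}(A)$. *)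

theory Defs
  imports "HOL-Analysis.Analysis"
begin

definition col :: "real^'n^'m \<Rightarrow> (real^'m) set" where
  "col A = span (columns A)"

definition std_simplex :: "(real^'n) set" where
  "std_simplex = {x. (\<Sum>i\<in>UNIV. x $ i) = 1 \<and> (\<forall>i. 0 \<le> x $ i)}"

definition P_out :: "real^'n^'n \<Rightarrow> (real^'n) set" where
  "P_out A = std_simplex \<inter> col A"

definition is_polygon_with_vertices :: "('a::euclidean_space) set \<Rightarrow> 'a set \<Rightarrow> bool" where
  "is_polygon_with_vertices P V \<longleftrightarrow>
     polytope P \<and> aff_dim P = 2 \<and> {v. v extreme_point_of P} = V"


text \<open>The squared-distance matrix D, its column-normalised version D',
  and the vectors u_k, v_k (indices k in {0..<n}, taken cyclically mod n).\<close>
definition sqdist_mat :: "('n::finite \<Rightarrow> real) \<Rightarrow> real^'n^'n" where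
  "sqdist_mat a = (\<chi> i j. (a i - a j)^2)"

definition col_normalize :: "real^'n^'n \<Rightarrow> real^'n^'n" where
  "col_normalize A = (\<chi> i j. A $ i $ j / (\<Sum>r\<in>UNIV. A $ r $ j))"

definition u_vec :: "('n::finite \<Rightarrow> real) \<Rightarrow> (nat \<Rightarrow> 'n) \<Rightarrow> nat \<Rightarrow> real^'n" where
  "u_vec a e k = (\<chi> i. (a i - a (e k)) * (a i - a (e ((k + 1) mod CARD('n)))))"

definition v_vec :: "('n::finite \<Rightarrow> real) \<Rightarrow> (nat \<Rightarrow> 'n) \<Rightarrow> nat \<Rightarrow> real^'n" where
  "v_vec a e k = (1 / (\<Sum>i\<in>UNIV. u_vec a e k $ i)) *\<^sub>R u_vec a e k"

end

theory Submission
  imports Defs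
begin

lemma quad_zero:
  fixes x y z c1 c2 c3 :: real
  assumes "x \<noteq> y" "x \<noteq> z" "y \<noteq> z"
    and "c1 + c2*x + c3*x^2 = 0" "c1 + c2*y + c3*y^2 = 0" "c1 + c2*z + c3*z^2 = 0"
  shows "c1 = 0 \<and> c2 = 0 \<and> c3 = 0"
proof -
  have "(c2 + c3*(x+y))*(x-y) = 0" using assms(4,5) by (simp add: algebra_simps power2_eq_square)
  hence h1: "c2 + c3*(x+y) = 0" using assms(1) by simp
  have "(c2 + c3*(x+z))*(x-z) = 0" using assms(4,6) by (simp add: algebra_simps power2_eq_square)
  hence h2: "c2 + c3*(x+z) = 0" using assms(2) by simp
  have "c3*(y-z) = (c2 + c3*(x+y)) - (c2 + c3*(x+z))" by (simp add: algebra_simps)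
  hence "c3*(y-z) = 0" using h1 h2 by simp
  hence c3: "c3 = 0" using assms(3) by simp
  with h1 have "c2 = 0" by simp
  with c3 assms(4) show ?thesis by simp
qed

lemma sgn_neg: "0 \<le> c * t \<Longrightarrow> t < 0 \<Longrightarrow> c \<le> (0::real)"
  by (simp add: zero_le_mult_iff)

lemma sgn_pos: "0 \<le> c * t \<Longrightarrow> 0 < t \<Longrightarrow> 0 \<le> (c::real)"
  by (simp add: zero_le_mult_iff)

locale L =
  fixes a :: "'n::finite \<Rightarrow> real" and e :: "nat \<Rightarrow> 'n"
  assumes n3: "CARD('n) \<ge> 3"
    and e_bij: "bij_betw e {..<CARD('n)} UNIV"
    and incr: "\<And>i j. i < j \<Longrightarrow> j < CARD('n) \<Longrightarrow> a (e i) < a (e j)"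
begin

definition pos :: "'n \<Rightarrow> nat" where "pos i = inv_into {..<CARD('n)} e i"
definition Q :: "(real^'n) set" where "Q = {x::real^'n. \<exists>c1 c2 c3. x = (\<chi> i. c1 + c2 * a i + c3 * a i ^ 2)}"
definition one :: "real^'n" where "one = (\<chi> i. 1)"
definition av :: "real^'n" where "av = (\<chi> i. a i)"
definition a2 :: "real^'n" where "a2 = (\<chi> i. a i ^ 2)"

lemma pos: "pos i < CARD('n)" "e (pos i) = i"
  using e_bij unfolding pos_def bij_betw_def
  by (metis UNIV_I inv_into_into lessThan_iff, metis UNIV_I f_inv_into_f)

lemma pos_e: "j < CARD('n) \<Longrightarrow> pos (e j) = j"
  using e_bij unfolding pos_def bij_betw_def by (simp add: inv_into_f_f)

lemma e_inj: "j < CARD('n) \<Longrightarrow> k < CARD('n) \<Longrightarrow> e j = e k \<Longrightarrow> j = k"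
  using pos_e by metis

lemma incr_le: "i \<le> j \<Longrightarrow> j < CARD('n) \<Longrightarrow> a (e i) \<le> a (e j)"
  using incr by (cases "i = j") (auto simp: le_less)

lemma a_inj: "a i = a j \<Longrightarrow> i = j"
proof (rule ccontr)
  assume h: "a i = a j" "i \<noteq> j"
  hence "pos i \<noteq> pos j" using pos(2) by metis
  hence "pos i < pos j \<or> pos j < pos i" by auto
  thus False using incr[of "pos i" "pos j"] incr[of "pos j" "pos i"] pos h by auto
qed

lemma a_cmp: "a i < a j \<longleftrightarrow> pos i < pos j"
proof
  assume "a i < a j"
  thus "pos i < pos j" using incr_le[of "pos j" "pos i"] pos by (metis not_le)
next
  assume "pos i < pos j" thus "a i < a j" using incr[of "pos i" "pos j"] pos by auto
qed

lemma three_distinct: "a (e 0) \<noteq> a (e 1)" "a (e 0) \<noteq> a (e 2)" "a (e 1) \<noteq> a (e 2)"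
  using incr[of 0 1] incr[of 0 2] incr[of 1 2] n3 by auto

lemma Q_sub: "subspace Q"
  unfolding subspace_def Q_def
proof (intro conjI ballI allI)
  show "0 \<in> {x::real^'n. \<exists>c1 c2 c3. x = (\<chi> i. c1 + c2 * a i + c3 * a i ^ 2)}"
    by (rule CollectI, rule exI[of _ 0], rule exI[of _ 0], rule exI[of _ 0]) (simp add: vec_eq_iff)
next
  fix x y assume "x \<in> {x::real^'n. \<exists>c1 c2 c3. x = (\<chi> i. c1 + c2 * a i + c3 * a i ^ 2)}"
    "y \<in> {x::real^'n. \<exists>c1 c2 c3. x = (\<chi> i. c1 + c2 * a i + c3 * a i ^ 2)}"
  then obtain c1 c2 c3 d1 d2 d3 where "x = (\<chi> i. c1 + c2 * a i + c3 * a i ^ 2)"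
      "y = (\<chi> i. d1 + d2 * a i + d3 * a i ^ 2)" by auto
  thus "x + y \<in> {x::real^'n. \<exists>c1 c2 c3. x = (\<chi> i. c1 + c2 * a i + c3 * a i ^ 2)}"
    by (intro CollectI exI[of _ "c1+d1"] exI[of _ "c2+d2"] exI[of _ "c3+d3"])
       (simp add: vec_eq_iff algebra_simps)
next
  fix c :: real and x assume "x \<in> {x::real^'n. \<exists>c1 c2 c3. x = (\<chi> i. c1 + c2 * a i + c3 * a i ^ 2)}"
  then obtain c1 c2 c3 where "x = (\<chi> i. c1 + c2 * a i + c3 * a i ^ 2)" by auto
  thus "c *\<^sub>R x \<in> {x::real^'n. \<exists>c1 c2 c3. x = (\<chi> i. c1 + c2 * a i + c3 * a i ^ 2)}"
    by (intro CollectI exI[of _ "c*c1"] exI[of _ "c*c2"] exI[of _ "c*c3"])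
       (simp add: vec_eq_iff algebra_simps)
qed

lemma QI: "(\<chi> i. c1 + c2 * a i + c3 * a i ^ 2) \<in> Q"
  unfolding Q_def by blast

lemma Q_comb: "(\<chi> i. c1 + c2 * a i + c3 * a i ^ 2) = c1 *\<^sub>R one + c2 *\<^sub>R av + c3 *\<^sub>R a2"
  by (simp add: vec_eq_iff one_def av_def a2_def)

lemma Q_le_span: "one \<in> S \<Longrightarrow> av \<in> S \<Longrightarrow> a2 \<in> S \<Longrightarrow> subspace S \<Longrightarrow> Q \<subseteq> S"
  unfolding Q_def using Q_comb
  by (auto intro!: subspace_add subspace_mul)

lemma Q_span: "Q = span {one, av, a2}"
proof
  show "Q \<subseteq> span {one, av, a2}" by (rule Q_le_span) (auto intro: span_base)
  show "span {one, av, a2} \<subseteq> Q"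
  proof (rule span_minimal[OF _ Q_sub])
    have "one = (\<chi> i. 1 + 0 * a i + 0 * a i ^ 2)" by (simp add: one_def)
    moreover have "av = (\<chi> i. 0 + 1 * a i + 0 * a i ^ 2)" by (simp add: av_def)
    moreover have "a2 = (\<chi> i. 0 + 0 * a i + 1 * a i ^ 2)" by (simp add: a2_def)
    ultimately show "{one, av, a2} \<subseteq> Q" using QI by (metis empty_subsetI insert_subset)
  qed
qed

lemma quad_vec_zero:
  assumes "c1 *\<^sub>R one + c2 *\<^sub>R av + c3 *\<^sub>R a2 = 0"
  shows "c1 = 0 \<and> c2 = 0 \<and> c3 = 0"
proof -
  have h: "\<And>i. c1 + c2 * a i + c3 * a i ^ 2 = 0"
    using assms by (simp add: vec_eq_iff one_def av_def a2_def)
  show ?thesis using quad_zero[OF three_distinct h h h] .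
qed

lemma dim_Q: "dim Q = 3"
proof -
  have d1: "one \<noteq> av" using quad_vec_zero[of 1 "-1" 0] by (auto simp: algebra_simps)
  have d2: "one \<noteq> a2" using quad_vec_zero[of 1 0 "-1"] by (auto simp: algebra_simps)
  have d3: "av \<noteq> a2" using quad_vec_zero[of 0 1 "-1"] by (auto simp: algebra_simps)
  have ind: "independent {one, av, a2}"
  proof
    assume "dependent {one, av, a2}"
    then obtain u where u: "\<exists>v\<in>{one, av, a2}. u v \<noteq> 0" "(\<Sum>v\<in>{one, av, a2}. u v *\<^sub>R v) = 0"
      using dependent_finite[of "{one, av, a2}"] by auto
    have "u one *\<^sub>R one + u av *\<^sub>R av + u a2 *\<^sub>R a2 = 0"
      using u(2) d1 d2 d3 by (simp add: add.assoc)
    from quad_vec_zero[OF this] u(1) show False by auto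
  qed
  have "dim Q = dim {one, av, a2}" by (simp add: Q_span)
  also have "\<dots> = card {one, av, a2}" by (rule dim_eq_card_independent[OF ind])
  also have "\<dots> = 3" using d1 d2 d3 by simp
  finally show ?thesis .
qed

lemma prodQ: "(\<chi> i. (a i - s) * (a i - t)) \<in> Q"
proof -
  have eq: "(\<chi> i. (a i - s) * (a i - t)) = (\<chi> i. s*t + (-(s+t)) * a i + 1 * a i ^ 2)"
    by (simp add: vec_eq_iff algebra_simps power2_eq_square)
  show ?thesis unfolding eq by (rule QI)
qed

lemma col_in: "column j A \<in> span (columns A)"
  by (rule span_base) (auto simp: columns_def)

lemma colD: "column j (sqdist_mat a) = (\<chi> i. (a i - a j)^2)"
  by (simp add: column_def sqdist_mat_def)

lemma col_D: "col (sqdist_mat a) = Q"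
proof -
  let ?S = "span (columns (sqdist_mat a))"
  have cj: "\<And>j. (\<chi> i. (a i - a j)^2) \<in> ?S"
    using colD col_in by metis
  define x where "x = a (e 0)"
  define y where "y = a (e 1)"
  define z where "z = a (e 2)"
  have xy: "x \<noteq> y" "x \<noteq> z" "y \<noteq> z" using three_distinct x_def y_def z_def by auto
  have wdef: "\<And>y'. x \<noteq> y' \<Longrightarrow> (\<chi> i. (x+y') - 2 * a i) =
        (1/(x-y')) *\<^sub>R ((\<chi> i. (a i - x)^2) - (\<chi> i. (a i - y')^2))"
  proof -
    fix y' :: real assume ne: "x \<noteq> y'"
    have "\<And>i. (a i - x)^2 - (a i - y')^2 = (x-y')*((x+y') - 2*a i)"
      by (simp add: algebra_simps power2_eq_square)
    thus "(\<chi> i. (x+y') - 2 * a i) =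
        (1/(x-y')) *\<^sub>R ((\<chi> i. (a i - x)^2) - (\<chi> i. (a i - y')^2))"
      using ne by (simp add: vec_eq_iff)
  qed
  have w: "\<And>y'. x \<noteq> y' \<Longrightarrow> y' \<in> range a \<Longrightarrow> (\<chi> i. (x+y') - 2 * a i) \<in> ?S"
  proof -
    fix y' assume "x \<noteq> y'" "y' \<in> range a"
    then obtain j where j: "y' = a j" by auto
    have "(\<chi> i. (a i - x)^2) \<in> ?S" using cj x_def by simp
    moreover have "(\<chi> i. (a i - y')^2) \<in> ?S" using cj j by simp
    ultimately show "(\<chi> i. (x+y') - 2 * a i) \<in> ?S"
      using wdef[OF \<open>x \<noteq> y'\<close>] by (simp add: span_diff span_scale)
  qed
  have wy: "(\<chi> i. (x+y) - 2 * a i) \<in> ?S" using w xy y_def by simp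
  have wz: "(\<chi> i. (x+z) - 2 * a i) \<in> ?S" using w xy z_def by simp
  have "one = (1/(y-z)) *\<^sub>R ((\<chi> i. (x+y) - 2 * a i) - (\<chi> i. (x+z) - 2 * a i))"
  proof -
    have "y - z \<noteq> 0" using xy by simp
    thus ?thesis by (simp add: vec_eq_iff one_def)
  qed
  hence one: "one \<in> ?S" using wy wz by (metis span_diff span_scale)
  have "av = (1/2) *\<^sub>R ((x+y) *\<^sub>R one - (\<chi> i. (x+y) - 2 * a i))"
    by (simp add: vec_eq_iff one_def av_def field_simps)
  hence av: "av \<in> ?S" using one wy by (metis span_diff span_scale)
  have "a2 = (\<chi> i. (a i - x)^2) - (x^2) *\<^sub>R one + (2*x) *\<^sub>R av"
    by (simp add: vec_eq_iff one_def av_def a2_def field_simps power2_eq_square)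
  moreover have "(\<chi> i. (a i - x)^2) \<in> ?S" using cj x_def by simp
  ultimately have a2: "a2 \<in> ?S" using one av by (metis span_diff span_scale span_add)
  show ?thesis unfolding col_def
  proof
    show "?S \<subseteq> Q"
    proof (rule span_minimal[OF _ Q_sub])
      show "columns (sqdist_mat a) \<subseteq> Q"
      proof
        fix c assume "c \<in> columns (sqdist_mat a)"
        then obtain j where "c = column j (sqdist_mat a)" unfolding columns_def by auto
        thus "c \<in> Q" using colD prodQ[of "a j" "a j"] by (simp add: power2_eq_square)
      qed
    qed
    show "Q \<subseteq> ?S" by (rule Q_le_span[OF one av a2 subspace_span])
  qed
qed

lemma d_pos: "0 < (\<Sum>r\<in>UNIV. sqdist_mat a $ r $ j)"
proof -
  have "e 0 \<noteq> e 1" using three_distinct by metis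
  then obtain r where "r \<noteq> j" by metis
  hence "0 < (a r - a j)^2" using a_inj by auto
  thus ?thesis by (intro sum_pos2[of UNIV r]) (auto simp: sqdist_mat_def)
qed

lemma col_D': "col (col_normalize (sqdist_mat a)) = Q"
proof -
  let ?D = "sqdist_mat a" and ?D' = "col_normalize (sqdist_mat a)"
  have c': "\<And>j. column j ?D' = (1 / (\<Sum>r\<in>UNIV. ?D $ r $ j)) *\<^sub>R column j ?D"
    by (simp add: column_def col_normalize_def vec_eq_iff)
  have "span (columns ?D') = span (columns ?D)"
  proof (subst span_eq, intro conjI subsetI)
    fix c assume "c \<in> columns ?D'"
    then obtain j where "c = column j ?D'" unfolding columns_def by auto
    thus "c \<in> span (columns ?D)" using c' col_in span_scale by metis
  next
    fix c assume "c \<in> columns ?D"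
    then obtain j where j: "c = column j ?D" unfolding columns_def by auto
    have "c = (\<Sum>r\<in>UNIV. ?D $ r $ j) *\<^sub>R column j ?D'"
      using c' d_pos[of j] j by simp
    thus "c \<in> span (columns ?D')" using col_in span_scale by metis
  qed
  thus ?thesis using col_D by (simp add: col_def)
qed

lemma rank_D: "rank (sqdist_mat a) = 3"
  using col_D dim_Q by (metis column_rank_def col_def dim_span)

definition nx :: "nat \<Rightarrow> nat" where "nx k = (k + 1) mod CARD('n)"

lemma nx_cases: "k < CARD('n) \<Longrightarrow> (k + 1 < CARD('n) \<and> nx k = k + 1) \<or> (k = CARD('n) - 1 \<and> nx k = 0)"
proof (cases "k + 1 < CARD('n)")
  case True thus ?thesis by (simp add: nx_def)
next
  case False
  assume "k < CARD('n)"
  with False have "k + 1 = CARD('n)" by simp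
  thus ?thesis by (simp add: nx_def)
qed

lemma nx_lt: "nx k < CARD('n)"
  unfolding nx_def using n3 by simp

lemma u_comp: "u_vec a e k $ i = (a i - a (e k)) * (a i - a (e (nx k)))"
  by (simp add: u_vec_def nx_def)

lemma uQ: "u_vec a e k \<in> Q"
proof -
  have "u_vec a e k = (\<chi> i. (a i - a (e k)) * (a i - a (e (nx k))))"
    by (simp add: vec_eq_iff u_comp)
  thus ?thesis using prodQ by simp
qed

lemma u_sign: assumes k: "k < CARD('n)"
  shows "\<exists>\<sigma>::real. \<sigma> \<noteq> 0 \<and> (\<forall>i. 0 \<le> \<sigma> * (u_vec a e k $ i))"
proof (cases "k + 1 < CARD('n)")
  case True
  hence nk: "nx k = k + 1" using nx_cases[OF k] by auto
  have "0 \<le> u_vec a e k $ i" for i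
  proof (cases "pos i \<le> k")
    case True
    hence "a i \<le> a (e k)" "a i \<le> a (e (k+1))" using incr_le[of "pos i" k] incr_le[of "pos i" "k+1"] pos k
      \<open>k + 1 < CARD('n)\<close> by auto
    thus ?thesis unfolding u_comp nk by (simp add: mult_nonpos_nonpos)
  next
    case False
    hence "a (e k) \<le> a i" "a (e (k+1)) \<le> a i" using incr_le[of k "pos i"] incr_le[of "k+1" "pos i"] pos k
      by auto
    thus ?thesis unfolding u_comp nk by simp
  qed
  thus ?thesis by (intro exI[of _ 1]) auto
next
  case False
  hence nk: "nx k = 0" and kk: "k = CARD('n) - 1" using nx_cases[OF k] by auto
  have "u_vec a e k $ i \<le> 0" for i
  proof -
    have "pos i \<le> k" using pos(1)[of i] kk by simp
    hence "a i \<le> a (e k)" "a (e 0) \<le> a i" using incr_le[of "pos i" k] incr_le[of 0 "pos i"] pos k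
      by auto
    thus ?thesis unfolding u_comp nk by (simp add: mult_nonpos_nonneg)
  qed
  thus ?thesis by (intro exI[of _ "-1"]) auto
qed

lemma u_zero: "u_vec a e k $ i = 0 \<longleftrightarrow> i = e k \<or> i = e (nx k)"
  unfolding u_comp using a_inj by auto

lemma other_idx: assumes "k < CARD('n)" shows "\<exists>i. i \<noteq> e k \<and> i \<noteq> e (nx k)"
proof -
  have "\<exists>m\<in>{0,1,2::nat}. m \<noteq> k \<and> m \<noteq> nx k" by auto
  then obtain m0 where m0: "m0 \<in> {0,1,2::nat}" "m0 \<noteq> k" "m0 \<noteq> nx k" by blast
  have "m0 < CARD('n)" using m0(1) n3 by auto
  hence "\<exists>m < CARD('n). m \<noteq> k \<and> m \<noteq> nx k" using m0 by blast
  then obtain m where m: "m < CARD('n)" "m \<noteq> k" "m \<noteq> nx k" by auto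
  show ?thesis using e_inj[OF m(1) assms] e_inj[OF m(1) nx_lt] m by (intro exI[of _ "e m"]) auto
qed

lemma s_sign: assumes k: "k < CARD('n)"
  shows "\<exists>\<sigma>::real. (\<forall>i. 0 \<le> \<sigma> * (u_vec a e k $ i)) \<and> 0 < \<sigma> * (\<Sum>i\<in>UNIV. u_vec a e k $ i)"
proof -
  obtain \<sigma> :: real where s: "\<sigma> \<noteq> 0" "\<forall>i. 0 \<le> \<sigma> * (u_vec a e k $ i)" using u_sign[OF k] by auto
  obtain i where i: "i \<noteq> e k" "i \<noteq> e (nx k)" using other_idx[OF k] by auto
  hence "u_vec a e k $ i \<noteq> 0" using u_zero by auto
  hence "\<sigma> * (u_vec a e k $ i) \<noteq> 0" using s(1) by simp
  moreover have "0 \<le> \<sigma> * (u_vec a e k $ i)" using s(2) by blast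
  ultimately have "0 < \<sigma> * (u_vec a e k $ i)" by linarith
  hence "0 < (\<Sum>j\<in>UNIV. \<sigma> * (u_vec a e k $ j))" using s(2) by (intro sum_pos2[of UNIV i]) auto
  thus ?thesis using s(2) by (intro exI[of _ \<sigma>]) (simp add: sum_distrib_left)
qed

definition Pset :: "(real^'n) set" where "Pset = std_simplex \<inter> Q"

lemma P_eq: "P_out (col_normalize (sqdist_mat a)) = Pset"
  by (simp add: P_out_def Pset_def col_D')

lemma v_comp: "v_vec a e k $ i = u_vec a e k $ i / (\<Sum>j\<in>UNIV. u_vec a e k $ j)"
  by (simp add: v_vec_def)

lemma v_in: assumes k: "k < CARD('n)" shows "v_vec a e k \<in> Pset"
proof -
  obtain \<sigma> :: real where s: "\<forall>i. 0 \<le> \<sigma> * (u_vec a e k $ i)" "0 < \<sigma> * (\<Sum>i\<in>UNIV. u_vec a e k $ i)"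
    using s_sign[OF k] by auto
  let ?s = "\<Sum>i\<in>UNIV. u_vec a e k $ i"
  have sne: "?s \<noteq> 0" using s(2) by auto
  have "0 \<le> v_vec a e k $ i" for i
  proof -
    have "\<sigma> \<noteq> 0" using s(2) by auto
    hence eq: "v_vec a e k $ i = (\<sigma> * u_vec a e k $ i) / (\<sigma> * ?s)"
      by (simp add: v_comp)
    show ?thesis unfolding eq by (rule divide_nonneg_pos) (use s in auto)
  qed
  moreover have "(\<Sum>i\<in>UNIV. v_vec a e k $ i) = 1"
    using sne by (simp add: v_comp sum_divide_distrib[symmetric])
  moreover have "v_vec a e k \<in> Q"
    unfolding v_vec_def by (rule subspace_mul[OF Q_sub uQ])
  ultimately show ?thesis by (simp add: Pset_def std_simplex_def)
qed

lemma zero2: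
  assumes x: "x \<in> Q" and "x $ p = 0" "x $ q = 0" "p \<noteq> q"
  shows "\<exists>c. x = c *\<^sub>R (\<chi> i. (a i - a p) * (a i - a q))"
proof -
  obtain c1 c2 c3 where xe: "x = (\<chi> i. c1 + c2 * a i + c3 * a i ^ 2)" using x Q_def by auto
  let ?al = "c1 - c3 * a p * a q" and ?be = "c2 + c3 * (a p + a q)"
  have r: "\<And>t. c1 + c2 * t + c3 * t^2 = c3 * ((t - a p) * (t - a q)) + (?al + ?be * t)"
    by (simp add: algebra_simps power2_eq_square)
  have "?al + ?be * a p = 0" using r[of "a p"] assms(2) xe by simp
  moreover have "?al + ?be * a q = 0" using r[of "a q"] assms(3) xe by simp
  ultimately have "?be * (a p - a q) = 0" by (simp add: algebra_simps)
  moreover have "a p \<noteq> a q" using a_inj assms(4) by auto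
  ultimately have be: "?be = 0" by simp
  hence "?al = 0" using \<open>?al + ?be * a p = 0\<close> by simp
  hence "x = c3 *\<^sub>R (\<chi> i. (a i - a p) * (a i - a q))"
    using be xe r by (simp add: vec_eq_iff)
  thus ?thesis by blast
qed

lemma normalize_v: assumes "y = c *\<^sub>R u_vec a e k" "(\<Sum>i\<in>UNIV. y $ i) = 1"
  shows "y = v_vec a e k"
proof -
  have "c * (\<Sum>i\<in>UNIV. u_vec a e k $ i) = 1" using assms by (simp add: sum_distrib_left)
  moreover hence "(\<Sum>i\<in>UNIV. u_vec a e k $ i) \<noteq> 0" by auto
  ultimately have "c = 1 / (\<Sum>i\<in>UNIV. u_vec a e k $ i)" by (simp add: eq_divide_eq)
  thus ?thesis using assms(1) by (simp add: v_vec_def)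
qed

lemma v_extreme: assumes k: "k < CARD('n)" shows "v_vec a e k extreme_point_of Pset"
  unfolding extreme_point_of_def
proof (intro conjI ballI notI)
  show "v_vec a e k \<in> Pset" by (rule v_in[OF k])
next
  fix y z assume y: "y \<in> Pset" and z: "z \<in> Pset" and vs: "v_vec a e k \<in> open_segment y z"
  then obtain t where t: "y \<noteq> z" "0 < t" "t < 1" "v_vec a e k = (1 - t) *\<^sub>R y + t *\<^sub>R z"
    by (auto simp: in_segment)
  have v0: "v_vec a e k $ e k = 0" "v_vec a e k $ e (nx k) = 0"
    by (simp_all add: v_vec_def u_zero)
  have nn: "\<And>i. 0 \<le> y $ i" "\<And>i. 0 \<le> z $ i" using y z by (auto simp: Pset_def std_simplex_def)
  have yz0: "y $ i = 0 \<and> z $ i = 0" if "v_vec a e k $ i = 0" for i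
  proof -
    have "(1 - t) * y $ i + t * z $ i = 0" using that t(4) by simp
    moreover have "0 \<le> (1 - t) * y $ i" "0 \<le> t * z $ i" using nn t by auto
    ultimately have "(1 - t) * y $ i = 0" "t * z $ i = 0" by linarith+
    thus ?thesis using t by auto
  qed
  have pq: "e k \<noteq> e (nx k)"
  proof
    assume "e k = e (nx k)"
    hence "k = nx k" using e_inj[OF k nx_lt] by simp
    thus False using nx_cases[OF k] n3 by auto
  qed
  have uk: "u_vec a e k = (\<chi> i. (a i - a (e k)) * (a i - a (e (nx k))))" by (simp add: vec_eq_iff u_comp)
  have isv: "w = v_vec a e k" if wP: "w \<in> Pset" "w $ e k = 0" "w $ e (nx k) = 0" for w
  proof -
    have "w \<in> Q" using wP(1) by (simp add: Pset_def)
    then obtain c where "w = c *\<^sub>R (\<chi> i. (a i - a (e k)) * (a i - a (e (nx k))))"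
      using zero2[of w "e k" "e (nx k)"] wP pq by blast
    hence "w = c *\<^sub>R u_vec a e k" using uk by simp
    moreover have "(\<Sum>i\<in>UNIV. w $ i) = 1" using wP by (auto simp: Pset_def std_simplex_def)
    ultimately show ?thesis by (rule normalize_v)
  qed
  have "y = v_vec a e k" using isv[OF y] yz0 v0 by auto
  moreover have "z = v_vec a e k" using isv[OF z] yz0 v0 by auto
  ultimately show False using t(1) by simp
qed

lemma Pset_mem: "x \<in> Pset \<longleftrightarrow> x \<in> Q \<and> (\<Sum>i\<in>UNIV. x $ i) = 1 \<and> (\<forall>i. 0 \<le> x $ i)"
  by (auto simp: Pset_def std_simplex_def)

lemma perturb:
  assumes x: "x \<in> Pset" and w: "w \<in> Q" "(\<Sum>i\<in>UNIV. w $ i) = 0" "w \<noteq> 0"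
    and wz: "\<forall>i. x $ i = 0 \<longrightarrow> w $ i = 0"
  shows "\<not> x extreme_point_of Pset"
proof
  assume ext: "x extreme_point_of Pset"
  have xQ: "x \<in> Q" and xs: "(\<Sum>i\<in>UNIV. x $ i) = 1" and xn: "\<And>i. 0 \<le> x $ i"
    using x by (auto simp: Pset_mem)
  define A where "A = insert 1 ((\<lambda>i. x $ i / (\<bar>w $ i\<bar> + 1)) ` {i. 0 < x $ i})"
  define \<epsilon> where "\<epsilon> = Min A"
  have finA: "finite A" "A \<noteq> {}" unfolding A_def by auto
  have "\<forall>t\<in>A. 0 < t" unfolding A_def by (auto intro!: divide_pos_pos)
  hence epos: "0 < \<epsilon>" unfolding \<epsilon>_def by (simp add: Min_gr_iff[OF finA])
  have ele: "\<epsilon> \<le> x $ i / (\<bar>w $ i\<bar> + 1)" if "0 < x $ i" for i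
    unfolding \<epsilon>_def by (rule Min_le[OF finA(1)]) (use that A_def in auto)
  have nn: "0 \<le> x $ i + c * w $ i" if c: "\<bar>c\<bar> \<le> \<epsilon>" for c i
  proof (cases "x $ i = 0")
    case True thus ?thesis using wz by simp
  next
    case False
    hence xp: "0 < x $ i" using xn[of i] by simp
    have "\<epsilon> * (\<bar>w $ i\<bar> + 1) \<le> x $ i" using ele[OF xp] by (simp add: le_divide_eq add_pos_nonneg)
    moreover have "\<bar>c * w $ i\<bar> \<le> \<epsilon> * \<bar>w $ i\<bar>" using c by (simp add: abs_mult mult_right_mono)
    moreover have "\<epsilon> * \<bar>w $ i\<bar> \<le> \<epsilon> * (\<bar>w $ i\<bar> + 1)" using epos by simp
    ultimately show ?thesis by linarith
  qed
  define y where "y = x + \<epsilon> *\<^sub>R w"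
  define z where "z = x - \<epsilon> *\<^sub>R w"
  have yP: "y \<in> Pset" unfolding Pset_mem y_def
    using nn[of \<epsilon>] epos xs w xQ
    by (auto simp: sum.distrib sum_distrib_left[symmetric] intro!: subspace_add[OF Q_sub] subspace_mul[OF Q_sub])
  have zP: "z \<in> Pset" unfolding Pset_mem z_def
    using nn[of "-\<epsilon>"] epos xs w xQ
    by (auto simp: sum_subtractf sum_distrib_left[symmetric] intro!: subspace_diff[OF Q_sub] subspace_mul[OF Q_sub])
  obtain i where wi: "w $ i \<noteq> 0" using w(3) by (auto simp: vec_eq_iff)
  hence "y $ i \<noteq> z $ i" using epos unfolding y_def z_def by simp
  hence "y \<noteq> z" by auto
  moreover have "x = (1 - 1/2) *\<^sub>R y + (1/2) *\<^sub>R z"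
    unfolding y_def z_def by (simp add: vec_eq_iff algebra_simps)
  ultimately have "x \<in> open_segment y z" unfolding in_segment by (intro conjI exI[of _ "1/2"]) auto
  thus False using ext yP zP unfolding extreme_point_of_def by blast
qed

lemma exists_other: "\<exists>i. i \<noteq> (p::'n)"
proof -
  have "e 0 \<noteq> e 1" using three_distinct by metis
  show ?thesis
  proof (cases "p = e 0")
    case True thus ?thesis using \<open>e 0 \<noteq> e 1\<close> by (intro exI[of _ "e 1"]) auto
  next
    case False thus ?thesis by (intro exI[of _ "e 0"]) auto
  qed
qed

lemma w_exists: "\<exists>w. w \<in> Q \<and> (\<Sum>i\<in>UNIV. w $ i) = 0 \<and> w \<noteq> 0 \<and> w $ p = 0"
proof (cases "(\<Sum>i\<in>UNIV. a i - a p) = 0")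
  case True
  define w where "w = (\<chi> i. a i - a p)"
  have weq: "w = (\<chi> i. (- a p) + 1 * a i + 0 * a i ^ 2)" unfolding w_def by (simp add: vec_eq_iff)
  have "w \<in> Q" unfolding weq by (rule QI)
  moreover obtain i where "i \<noteq> p" using exists_other by blast
  hence "a i \<noteq> a p" using a_inj by blast
  hence "w $ i \<noteq> 0" unfolding w_def by simp
  hence "w \<noteq> 0" by auto
  ultimately show ?thesis using True unfolding w_def by auto
next
  case False
  define S where "S = (\<Sum>i\<in>UNIV. a i - a p)"
  define m where "m = (\<Sum>i\<in>UNIV. (a i - a p) * a i) / S"
  define w where "w = (\<chi> i. (a i - a p) * (a i - m))"
  have S0: "S \<noteq> 0" using False S_def by simp
  have "w \<in> Q" unfolding w_def by (rule prodQ)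
  moreover have "(\<Sum>i\<in>UNIV. w $ i) = 0"
  proof -
    have "(\<Sum>i\<in>UNIV. w $ i) = (\<Sum>i\<in>UNIV. (a i - a p) * a i - m * (a i - a p))"
      unfolding w_def by (simp add: algebra_simps)
    also have "\<dots> = (\<Sum>i\<in>UNIV. (a i - a p) * a i) - m * S"
      unfolding S_def sum_distrib_left by (rule sum_subtractf)
    also have "\<dots> = 0" using S0 by (simp add: m_def)
    finally show ?thesis .
  qed
  moreover have "w \<noteq> 0"
  proof -
    have "\<exists>i. a i \<noteq> a p \<and> a i \<noteq> m" using three_distinct by metis
    then obtain i where "a i \<noteq> a p" "a i \<noteq> m" by blast
    hence "w $ i \<noteq> 0" unfolding w_def by simp
    thus ?thesis by auto
  qed
  moreover have "w $ p = 0" unfolding w_def by simp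
  ultimately show ?thesis by blast
qed

lemma ext_v: assumes ext: "x extreme_point_of Pset"
  shows "\<exists>k < CARD('n). x = v_vec a e k"
proof -
  have x: "x \<in> Pset" using ext by (simp add: extreme_point_of_def)
  hence xQ: "x \<in> Q" and xs: "(\<Sum>i\<in>UNIV. x $ i) = 1" and xn: "\<And>i. 0 \<le> x $ i"
    by (auto simp: Pset_mem)
  show ?thesis
  proof (cases "\<exists>p q. p \<noteq> q \<and> x $ p = 0 \<and> x $ q = 0")
    case True
    have "\<exists>p q. pos p < pos q \<and> x $ p = 0 \<and> x $ q = 0"
    proof -
      obtain p q where pq: "p \<noteq> q" "x $ p = 0" "x $ q = 0" using True by blast
      hence "pos p \<noteq> pos q" using pos(2) by metis
      show ?thesis
      proof (cases "pos p < pos q")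
        case True thus ?thesis using pq by blast
      next
        case False
        hence "pos q < pos p" using \<open>pos p \<noteq> pos q\<close> by simp
        thus ?thesis using pq by blast
      qed
    qed
    then obtain p q where pq: "pos p < pos q" "x $ p = 0" "x $ q = 0" by blast
    have pnq: "p \<noteq> q" using pq(1) by auto
    obtain c where c: "x = c *\<^sub>R (\<chi> i. (a i - a p) * (a i - a q))"
      using zero2[OF xQ pq(2,3) pnq] by blast
    have xc: "\<And>i. x $ i = c * ((a i - a p) * (a i - a q))" using c by simp
    show ?thesis
    proof (cases "pos q = pos p + 1")
      case True
      have k: "pos p < CARD('n)" by (rule pos(1))
      have nk: "nx (pos p) = pos p + 1" using nx_cases[OF k] True pos(1)[of q] by auto
      have "u_vec a e (pos p) = (\<chi> i. (a i - a p) * (a i - a q))"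
      proof -
        have eq: "e (pos p + 1) = q" using True pos(2)[of q] by metis
        show ?thesis unfolding vec_eq_iff u_comp nk eq pos(2) by simp
      qed
      hence "x = v_vec a e (pos p)" using c xs by (intro normalize_v) auto
      thus ?thesis using k by blast
    next
      case False
      show ?thesis
      proof (cases "pos p = 0 \<and> pos q = CARD('n) - 1")
        case True
        define k where "k = CARD('n) - 1"
        have k: "k < CARD('n)" using n3 k_def by simp
        have nk: "nx k = 0" using nx_cases[OF k] k_def n3 by auto
        have "u_vec a e k = (\<chi> i. (a i - a p) * (a i - a q))"
        proof -
          have ek: "e k = q" using True k_def pos(2)[of q] by metis
          have e0: "e 0 = p" using True pos(2)[of p] by metis
          show ?thesis unfolding vec_eq_iff u_comp nk ek e0 by (simp add: mult.commute)
        qed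
        hence "x = v_vec a e k" using c xs by (intro normalize_v) auto
        thus ?thesis using k by blast
      next
        case F2: False
        define j where "j = pos p + 1"
        have j: "pos p < j" "j < pos q" using False pq(1) j_def by auto
        have jN: "j < CARD('n)" using j pos(1)[of q] by simp
        have "a p < a (e j)" "a (e j) < a q"
          using incr[OF j(1) jN] incr[OF j(2) pos(1)] pos(2) by auto
        hence neg: "(a (e j) - a p) * (a (e j) - a q) < 0" by (simp add: mult_pos_neg)
        have cle: "c \<le> 0"
        proof -
          have "0 \<le> x $ e j" by (rule xn)
          hence "0 \<le> c * ((a (e j) - a p) * (a (e j) - a q))" unfolding xc .
          thus ?thesis using neg by (rule sgn_neg)
        qed
        obtain j' where j': "j' < CARD('n)" "j' < pos p \<or> pos q < j'"
        proof (cases "pos p = 0")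
          case True
          hence "pos q < CARD('n) - 1" using F2 pos(1)[of q] by auto
          thus ?thesis using that[of "CARD('n) - 1"] n3 by auto
        next
          case False
          thus ?thesis using that[of 0] n3 by auto
        qed
        have pos': "0 < (a (e j') - a p) * (a (e j') - a q)"
        proof (cases "j' < pos p")
          case True
          hence "a (e j') < a p" "a (e j') < a q" using incr[OF True pos(1)] incr[of j' "pos q"] pq(1) pos(2) pos(1)[of q] by auto
          thus ?thesis by (simp add: mult_neg_neg)
        next
          case False
          hence "pos q < j'" using j' by auto
          moreover hence "pos p < j'" using pq(1) by simp
          ultimately have "a p < a (e j')" "a q < a (e j')" using incr[OF _ j'(1)] pos(2) by metis+
          thus ?thesis by simp
        qed
        have "0 \<le> c" 
        proof -
          have "0 \<le> x $ e j'" by (rule xn)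
          hence "0 \<le> c * ((a (e j') - a p) * (a (e j') - a q))" unfolding xc .
          thus ?thesis using pos' by (rule sgn_pos)
        qed
        hence "c = 0" using cle by simp
        hence "x = 0" using c by simp
        hence False using xs by simp
        thus ?thesis ..
      qed
    qed
  next
    case False
    obtain p where p: "\<forall>i. x $ i = 0 \<longrightarrow> i = p"
    proof (cases "\<exists>p. x $ p = 0")
      case True
      then obtain p where "x $ p = 0" by blast
      thus ?thesis using False that[of p] by blast
    next
      case False thus ?thesis using that by blast
    qed
    obtain w where w: "w \<in> Q" "(\<Sum>i\<in>UNIV. w $ i) = 0" "w \<noteq> 0" "w $ p = 0"
      using w_exists by blast
    have "\<forall>i. x $ i = 0 \<longrightarrow> w $ i = 0" using p w(4) by blast
    hence "\<not> x extreme_point_of Pset" using perturb[OF x w(1-3)] by blast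
    thus ?thesis using ext by blast
  qed
qed

lemma inner_one: "one \<bullet> x = (\<Sum>i\<in>UNIV. x $ i)"
  by (simp add: inner_vec_def one_def)

lemma simplex_eq: "std_simplex = {x. one \<bullet> x = 1} \<inter> (\<Inter>i. {x::real^'n. axis i 1 \<bullet> x \<ge> 0})"
  by (auto simp: std_simplex_def inner_one inner_axis')

lemma Pset_eq: "Pset = Q \<inter> ({x. one \<bullet> x = 1} \<inter> (\<Inter>i. {x::real^'n. axis i 1 \<bullet> x \<ge> 0}))"
  unfolding Pset_def simplex_eq by blast

lemma Pset_convex: "convex Pset"
  unfolding Pset_eq
  by (intro convex_Int subspace_imp_convex[OF Q_sub] convex_hyperplane convex_INT convex_halfspace_ge ballI)

lemma Pset_closed: "closed Pset"
  unfolding Pset_eq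
  by (intro closed_Int closed_subspace[OF Q_sub] closed_hyperplane closed_INT closed_halfspace_ge ballI)

lemma Pset_bounded: "bounded Pset"
  unfolding bounded_iff
proof (intro exI ballI)
  fix x assume "x \<in> Pset"
  hence "(\<Sum>i\<in>UNIV. x $ i) = 1" "\<And>i. 0 \<le> x $ i" by (auto simp: Pset_mem)
  hence "(\<Sum>i\<in>UNIV. \<bar>x $ i\<bar>) = 1" by simp
  thus "norm x \<le> 1" using norm_le_l1_cart[of x] by simp
qed

lemma Pset_compact: "compact Pset"
  using Pset_closed Pset_bounded compact_eq_bounded_closed by blast

lemma ext_set: "{x. x extreme_point_of Pset} = v_vec a e ` {..<CARD('n)}"
  using ext_v v_extreme by auto

lemma Pset_polytope: "polytope Pset"
proof -
  have "Pset = convex hull {x. x extreme_point_of Pset}"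
    using Krein_Milman_Minkowski[OF Pset_compact Pset_convex] .
  thus ?thesis unfolding polytope_def ext_set by blast
qed

lemma one_Q: "one \<in> Q"
proof -
  have "one = (\<chi> i. 1 + 0 * a i + 0 * a i ^ 2)" by (simp add: one_def vec_eq_iff)
  thus ?thesis using QI by metis
qed

lemma Pset_aff_dim: "aff_dim Pset = 2"
proof -
  define H where "H = Q \<inter> {x. one \<bullet> x = 1}"
  define c0 where "c0 = (1 / real CARD('n)) *\<^sub>R one"
  have c0Q: "c0 \<in> Q" unfolding c0_def by (rule subspace_mul[OF Q_sub one_Q])
  have c0s: "one \<bullet> c0 = 1" unfolding c0_def inner_one by (simp add: one_def)
  have c0c: "c0 $ i = 1 / real CARD('n)" for i by (simp add: c0_def one_def)
  have "aff_dim Q = 3" using aff_dim_subspace[OF Q_sub] dim_Q by simp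
  moreover have "Q \<inter> {v. one \<bullet> v = 1} \<noteq> {}" using c0Q c0s by blast
  moreover have "\<not> Q \<subseteq> {v. one \<bullet> v = 1}" using subspace_0[OF Q_sub] by auto
  ultimately have aH: "aff_dim H = 2"
    unfolding H_def using aff_dim_affine_Int_hyperplane[OF subspace_imp_affine[OF Q_sub], of one 1] by simp
  have "Pset \<subseteq> H" unfolding Pset_eq H_def by blast
  hence le: "aff_dim Pset \<le> 2" using aff_dim_subset aH by metis
  define T where "T = (\<Inter>i. {x::real^'n. axis i 1 \<bullet> x > 0})"
  have oT: "open T" unfolding T_def by (rule open_INT) (auto intro: open_halfspace_gt)
  have "c0 \<in> H \<inter> T" unfolding H_def T_def using c0Q c0s c0c by (auto simp: inner_axis')
  hence "aff_dim (H \<inter> T) = aff_dim H"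
    using aff_dim_convex_Int_open[OF _ oT] convex_Int[OF subspace_imp_convex[OF Q_sub] convex_hyperplane]
    unfolding H_def by blast
  moreover have "H \<inter> T \<subseteq> Pset" unfolding Pset_eq H_def T_def by (auto simp: less_imp_le)
  ultimately have "2 \<le> aff_dim Pset" using aff_dim_subset aH by metis
  with le show ?thesis by simp
qed

lemma v_zero: assumes k: "k < CARD('n)"
  shows "v_vec a e k $ i = 0 \<longleftrightarrow> i = e k \<or> i = e (nx k)"
proof -
  obtain \<sigma> :: real where "0 < \<sigma> * (\<Sum>i\<in>UNIV. u_vec a e k $ i)" using s_sign[OF k] by blast
  hence "(\<Sum>i\<in>UNIV. u_vec a e k $ i) \<noteq> 0" by auto
  thus ?thesis by (simp add: v_comp u_zero)
qed

lemma v_inj: "inj_on (v_vec a e) {..<CARD('n)}"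
proof (rule inj_onI)
  fix k l assume k: "k \<in> {..<CARD('n)}" and l: "l \<in> {..<CARD('n)}" and eq: "v_vec a e k = v_vec a e l"
  hence k': "k < CARD('n)" and l': "l < CARD('n)" by auto
  have "v_vec a e l $ e k = 0" using eq v_zero[OF k'] by simp
  hence "e k = e l \<or> e k = e (nx l)" using v_zero[OF l'] by simp
  hence A: "k = l \<or> k = nx l" using e_inj[OF k' l'] e_inj[OF k' nx_lt] by blast
  have "v_vec a e k $ e l = 0" using eq v_zero[OF l'] by simp
  hence "e l = e k \<or> e l = e (nx k)" using v_zero[OF k'] by simp
  hence B: "l = k \<or> l = nx k" using e_inj[OF l' k'] e_inj[OF l' nx_lt] by blast
  show "k = l"
  proof (rule ccontr)
    assume "k \<noteq> l"
    hence "k = nx l" "l = nx k" using A B by auto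
    thus False using nx_cases[OF k'] nx_cases[OF l'] n3 by auto
  qed
qed

end

theorem mainTheorem7:
  fixes a :: "'n::finite \<Rightarrow> real"
    and e :: "nat \<Rightarrow> 'n"
  assumes n3: "CARD('n) \<ge> 3"
    and e_bij: "bij_betw e {..<CARD('n)} UNIV"
    and incr: "\<And>i j. i < j \<Longrightarrow> j < CARD('n) \<Longrightarrow> a (e i) < a (e j)"
  shows "rank (sqdist_mat a) = 3
     \<and> (\<forall>k < CARD('n). u_vec a e k \<in> col (sqdist_mat a))
     \<and> is_polygon_with_vertices (P_out (col_normalize (sqdist_mat a))) (v_vec a e ` {..<CARD('n)})
     \<and> card (v_vec a e ` {..<CARD('n)}) = CARD('n)"
proof -
  interpret L a e using assms by unfold_locales auto
  have 1: "rank (sqdist_mat a) = 3" by (rule rank_D)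
  have 2: "\<forall>k < CARD('n). u_vec a e k \<in> col (sqdist_mat a)" using uQ col_D by simp
  have 3: "is_polygon_with_vertices (P_out (col_normalize (sqdist_mat a))) (v_vec a e ` {..<CARD('n)})"
    unfolding is_polygon_with_vertices_def P_eq using Pset_polytope Pset_aff_dim ext_set by simp
  have 4: "card (v_vec a e ` {..<CARD('n)}) = CARD('n)"
    using card_image[OF v_inj] by simp
  show ?thesis using 1 2 3 4 by blast
qed

end
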